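(* There is an absolute constant $K>0$ such that the following holds. Let $n\ge 1$, $k=\lfloor\sqrt n\rfloor$, and let $M_n$ be the $\binom{n}{k}\times n$ matrix whose rows are all the distinct $0/1$ vectors of length $n$ with exactly $k$ ones. Consider a bimatrix game in which the row player's payoff matrix is $M_n$ (the column player's payoff matrix is arbitrary). Then for every mixed strategy $\mathbf{x}$ of the row player there exists a column $m$ of $M_n$ such that, for every $p\in[0,1]$ and every mixed strategy $\mathbf{y}$ of the column player that assigns probability $p$ to column $m$, the row player's regret against $\mathbf{y}$ is at least $p-K/\sqrt n$, i.e. $\max_i \mathbf{e}_i^T M_n\mathbf{y}-\mathbf{x}^T M_n\mathbf{y}\ge p-K/\sqrt{n}$.
   Context: Mixed strategies are probability vectors over rows (for the row player) and columns (for the column player); the row player's payoff under $(\mathbf{x},\mathbf{y})$ is $\mathbf{x}^T M\mathbf{y}$ for his payoff matrix $M$. The regret of the row player is the difference between the payoff of his best response to $\mathbf{y}$ and his actual payoff $\mathbf{x}^TM\mathbf{y}$. *)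

theory Defs
  imports Complex_Main
begin

definition kk :: "nat \<Rightarrow> nat" where
  "kk n = nat \<lfloor>sqrt (real n)\<rfloor>"

definition rows :: "nat \<Rightarrow> nat set set" where
  "rows n = {S. S \<subseteq> {..<n} \<and> card S = kk n}"

definition Mn :: "nat set \<Rightarrow> nat \<Rightarrow> real" where
  "Mn S j = (if j \<in> S then 1 else 0)"

definition mixed :: "'a set \<Rightarrow> ('a \<Rightarrow> real) \<Rightarrow> bool" where
  "mixed A v \<longleftrightarrow> (\<forall>a\<in>A. v a \<ge> 0) \<and> sum v A = 1"

definition row_payoff :: "nat \<Rightarrow> (nat set \<Rightarrow> real) \<Rightarrow> (nat \<Rightarrow> real) \<Rightarrow> real" where
  "row_payoff n x y = (\<Sum>S\<in>rows n. \<Sum>j<n. x S * Mn S j * y j)"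

definition pure_payoff :: "nat \<Rightarrow> nat set \<Rightarrow> (nat \<Rightarrow> real) \<Rightarrow> real" where
  "pure_payoff n S y = (\<Sum>j<n. Mn S j * y j)"

definition regret :: "nat \<Rightarrow> (nat set \<Rightarrow> real) \<Rightarrow> (nat \<Rightarrow> real) \<Rightarrow> real" where
  "regret n x y = (MAX S\<in>rows n. pure_payoff n S y) - row_payoff n x y"

end

theory Submission
  imports Defs
begin

lemma kk_facts:
  assumes "n \<ge> 1"
  shows "1 \<le> kk n" "kk n \<le> n" "real (kk n) \<le> sqrt (real n)" "sqrt (real n) < real (kk n) + 1"
proof -
  have s1: "sqrt (real n) \<ge> 1" using assms by simp
  have fl: "real_of_int \<lfloor>sqrt (real n)\<rfloor> \<le> sqrt (real n)" "sqrt (real n) < real_of_int \<lfloor>sqrt (real n)\<rfloor> + 1"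
    by linarith+
  have fge: "\<lfloor>sqrt (real n)\<rfloor> \<ge> 1" using s1 by linarith
  have kr: "real (kk n) = real_of_int \<lfloor>sqrt (real n)\<rfloor>" unfolding kk_def using fge by simp
  show "real (kk n) \<le> sqrt (real n)" "sqrt (real n) < real (kk n) + 1" using fl kr by auto
  show "1 \<le> kk n" unfolding kk_def using fge by linarith
  have "sqrt (real n) \<le> real n"
  proof -
    have "sqrt (real n) * 1 \<le> sqrt (real n) * sqrt (real n)" by (rule mult_left_mono) (use s1 in auto)
    then show ?thesis by simp
  qed
  then have "real (kk n) \<le> real n" using fl kr by linarith
  then show "kk n \<le> n" by simp
qed

lemma pure_sum:
  assumes "S \<subseteq> {..<n}"
  shows "pure_payoff n S y = sum y S"
proof -
  have "pure_payoff n S y = (\<Sum>j\<in>{..<n}. if j \<in> S then y j else 0)"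
    unfolding pure_payoff_def Mn_def by (intro sum.cong) auto
  also have "\<dots> = sum y ({..<n} \<inter> S)" by (simp add: sum.inter_restrict)
  also have "{..<n} \<inter> S = S" using assms by auto
  finally show ?thesis .
qed

lemma rows_finite: "finite (rows n)"
proof -
  have "rows n \<subseteq> Pow {..<n}" unfolding rows_def by auto
  then show ?thesis by (rule finite_subset) auto
qed

lemma rows_ne:
  assumes "n \<ge> 1" shows "rows n \<noteq> {}"
proof -
  obtain S where "S \<subseteq> {..<n}" "card S = kk n"
    using obtain_subset_with_card_n[of "kk n" "{..<n}"] kk_facts[OF assms] by auto
  then show ?thesis unfolding rows_def by auto
qed

lemma swap_lemma:
  assumes n: "n \<ge> 1" and S: "S \<in> rows n" and m: "m < n" "m \<notin> S"
    and y: "\<forall>j\<in>{..<n}. y j \<ge> 0" "sum y {..<n} = 1"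
  shows "\<exists>S'\<in>rows n. pure_payoff n S y \<le> pure_payoff n S' y - y m + 1 / real (kk n)"
proof -
  have Ssub: "S \<subseteq> {..<n}" and cS: "card S = kk n" using S unfolding rows_def by auto
  have fS: "finite S" using Ssub finite_subset by blast
  have k1: "kk n \<ge> 1" using kk_facts[OF n] by simp
  then have Sne: "S \<noteq> {}" using cS by auto
  have "Min (y ` S) \<in> y ` S" using fS Sne by simp
  then obtain j0 where j0S: "j0 \<in> S" and j0eq: "y j0 = Min (y ` S)" by auto
  have j0min: "\<forall>j\<in>S. y j0 \<le> y j" using j0eq fS by simp
  have "real (kk n) * y j0 = (\<Sum>j\<in>S. y j0)" using cS by simp
  also have "\<dots> \<le> sum y S" using j0min by (intro sum_mono) auto
  also have "\<dots> \<le> sum y {..<n}" using y(1) Ssub by (intro sum_mono2) auto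
  finally have "real (kk n) * y j0 \<le> 1" using y(2) by simp
  then have yj0: "y j0 \<le> 1 / real (kk n)" using k1 by (simp add: field_simps)
  define S' where "S' = insert m (S - {j0})"
  have S'sub: "S' \<subseteq> {..<n}" using Ssub m unfolding S'_def by auto
  have cS': "card S' = kk n" unfolding S'_def using fS m j0S cS k1
    by (simp add: card_Diff_singleton)
  have S'r: "S' \<in> rows n" using S'sub cS' unfolding rows_def by auto
  have "sum y S' = y m + sum y (S - {j0})" unfolding S'_def using fS m by simp
  also have "sum y (S - {j0}) = sum y S - y j0" using fS j0S by (simp add: sum_diff1)
  finally have "sum y S' = y m + sum y S - y j0" by simp
  then have "pure_payoff n S y = pure_payoff n S' y - y m + y j0"
    using pure_sum[OF Ssub] pure_sum[OF S'sub] by simp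
  then show ?thesis using S'r yj0 by force
qed

lemma row_payoff_alt: "row_payoff n x y = (\<Sum>S\<in>rows n. x S * pure_payoff n S y)"
  unfolding row_payoff_def pure_payoff_def by (simp add: sum_distrib_left mult.assoc)

theorem lemma1:
  shows "\<exists>K::real. K > 0 \<and>
    (\<forall>n::nat. n \<ge> 1 \<longrightarrow>
      (\<forall>x. mixed (rows n) x \<longrightarrow>
        (\<exists>m<n. \<forall>p::real. 0 \<le> p \<and> p \<le> 1 \<longrightarrow>
          (\<forall>y. mixed {..<n} y \<and> y m = p \<longrightarrow>
             regret n x y \<ge> p - K / sqrt (real n)))))"
proof (rule exI[where x="3::real"], intro conjI allI impI)
  show "(0::real) < 3" by simp
next
  fix n :: nat and x :: "nat set \<Rightarrow> real"
  assume n: "1 \<le> n" and mx: "mixed (rows n) x"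
  have x0: "\<forall>S\<in>rows n. x S \<ge> 0" and x1: "sum x (rows n) = 1" using mx unfolding mixed_def by auto
  note kf = kk_facts[OF n]
  define k where "k = kk n"
  define q where "q j = (\<Sum>S\<in>rows n. x S * Mn S j)" for j
  have q0: "q j \<ge> 0" for j unfolding q_def using x0 by (intro sum_nonneg) (auto simp: Mn_def)
  have "sum q {..<n} = (\<Sum>S\<in>rows n. x S * (\<Sum>j<n. Mn S j))"
    unfolding q_def by (simp add: sum.swap[of _ "{..<n}"] sum_distrib_left)
  also have "\<dots> = (\<Sum>S\<in>rows n. x S * real k)"
  proof (intro sum.cong refl)
    fix S assume "S \<in> rows n"
    then have "S \<subseteq> {..<n}" "card S = k" unfolding rows_def k_def by auto
    then have "(\<Sum>j<n. Mn S j) = real k" using pure_sum[of S n "\<lambda>_. 1"]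
      unfolding pure_payoff_def by simp
    then show "x S * (\<Sum>j<n. Mn S j) = x S * real k" by simp
  qed
  also have "\<dots> = real k" using x1 by (simp add: sum_distrib_right[symmetric])
  finally have sq: "sum q {..<n} = real k" .
  have "0 \<in> {..<n}" using n by simp
  then have ne: "{..<n} \<noteq> {}" by blast
  have "Min (q ` {..<n}) \<in> q ` {..<n}" using ne by simp
  then obtain m where mn: "m < n" and meq: "q m = Min (q ` {..<n})" by auto
  have mmin: "\<forall>j<n. q m \<le> q j" using meq by simp
  have "real n * q m = (\<Sum>j<n. q m)" by simp
  also have "\<dots> \<le> sum q {..<n}" using mmin by (intro sum_mono) auto
  finally have nq: "real n * q m \<le> real k" using sq by simp
  have sn: "sqrt (real n) > 0" using n by simp
  have k1: "real k \<ge> 1" using kf unfolding k_def by simp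
  have qb: "q m \<le> 1 / sqrt (real n)"
  proof -
    have "q m \<le> real k / real n" using nq n by (simp add: field_simps)
    also have "\<dots> \<le> sqrt (real n) / real n" using kf n unfolding k_def by (simp add: divide_right_mono)
    also have "\<dots> = 1 / sqrt (real n)"
    proof -
      have "sqrt (real n) * sqrt (real n) = real n" by simp
      then show ?thesis using sn by (simp add: field_simps)
    qed
    finally show ?thesis .
  qed
  have kb: "1 / real k \<le> 2 / sqrt (real n)"
  proof -
    have "sqrt (real n) \<le> 2 * real k" using kf k1 unfolding k_def by linarith
    then show ?thesis using sn k1 by (simp add: field_simps)
  qed
  show "\<exists>m<n. \<forall>p::real. 0 \<le> p \<and> p \<le> 1 \<longrightarrow>
          (\<forall>y. mixed {..<n} y \<and> y m = p \<longrightarrow> regret n x y \<ge> p - (3::real) / sqrt (real n))"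
  proof (intro exI[of _ m] conjI allI impI mn)
    fix p :: real and y
    assume p: "0 \<le> p \<and> p \<le> 1" and my: "mixed {..<n} y \<and> y m = p"
    have y0: "\<forall>j\<in>{..<n}. y j \<ge> 0" and y1: "sum y {..<n} = 1" and ym: "y m = p"
      using my unfolding mixed_def by auto
    define B where "B = (MAX S\<in>rows n. pure_payoff n S y)"
    have Bge: "pure_payoff n S y \<le> B" if "S \<in> rows n" for S
      unfolding B_def using that rows_finite by simp
    have per: "pure_payoff n S y \<le> B + 1 / real k - p + p * Mn S m" if S: "S \<in> rows n" for S
    proof (cases "m \<in> S")
      case True
      have "1 / real k \<ge> 0" by simp
      moreover have "p * Mn S m = p" using True by (simp add: Mn_def)
      ultimately show ?thesis using Bge[OF S] by linarith
    next
      case False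
      obtain S' where "S' \<in> rows n" "pure_payoff n S y \<le> pure_payoff n S' y - y m + 1 / real (kk n)"
        using swap_lemma[OF n S mn False y0 y1] by blast
      then show ?thesis using Bge[of S'] False ym unfolding k_def by (simp add: Mn_def)
    qed
    have "row_payoff n x y \<le> (\<Sum>S\<in>rows n. x S * (B + 1 / real k - p + p * Mn S m))"
      unfolding row_payoff_alt using x0 per by (intro sum_mono mult_left_mono) auto
    also have "\<dots> = (B + 1 / real k - p) * sum x (rows n) + p * q m"
    proof -
      have "(\<Sum>S\<in>rows n. x S * (B + 1 / real k - p + p * Mn S m))
          = (\<Sum>S\<in>rows n. (B + 1 / real k - p) * x S + p * (x S * Mn S m))"
        by (intro sum.cong refl) (simp add: algebra_simps)
      also have "\<dots> = (\<Sum>S\<in>rows n. (B + 1 / real k - p) * x S) + (\<Sum>S\<in>rows n. p * (x S * Mn S m))"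
        by (rule sum.distrib)
      also have "\<dots> = (B + 1 / real k - p) * sum x (rows n) + p * q m"
        unfolding q_def by (simp add: sum_distrib_left)
      finally show ?thesis .
    qed
    also have "\<dots> = B + 1 / real k - p + p * q m" using x1 by simp
    finally have rp: "row_payoff n x y \<le> B + 1 / real k - p + p * q m" .
    have "p * q m \<le> q m" using p q0[of m] by (simp add: mult_left_le_one_le)
    then have "regret n x y \<ge> p - q m - 1 / real k"
      using rp unfolding regret_def B_def[symmetric] by linarith
    then show "regret n x y \<ge> p - 3 / sqrt (real n)" using qb kb by (simp add: field_simps)
  qed
qed

end
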